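(* For fixed positive integer $t$, the two-variable function $(\rho,k)\mapsto\tilde L_0(\rho,k,t)$ (on $1<\rho<t$, $k>0$) has partial derivatives \[ \frac{\partial}{\partial k}\tilde L_0(\rho,k,t)=\frac{\rho-1}{k}\quad\text{and}\quad \frac{\partial}{\partial\rho}\tilde L_0(\rho,k,t)=\log(\rho k)-y_t(\rho). \]
   Context: $d_i=2^{\binom i2}i!$. For positive integer $t$ and real $1<\rho<t$, $x_t(\rho),y_t(\rho)$ denote the unique reals $x,y$ with $\sum_{i=1}^t e^{x+iy}d_i^{-1}=1$ and $\sum_{i=1}^t ie^{x+iy}d_i^{-1}=\rho$. $\tilde P_{\rho,t}=\{(p_i)_{i=1}^t\in[0,1]^t:\sum_ip_i=1,\sum_iip_i=\rho\}$, and $\tilde L_0(\rho,k,t)=\sup_{\mathbf p\in\tilde P_{\rho,t}}\{\rho\log(\rho k)-\log k-\rho+1-\sum_ip_i\log(p_id_i)\}$ (with $0\log0=0$). Logarithms are natural. *)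

theory Defs
  imports "HOL-Analysis.Analysis"
begin

definition d :: "nat \<Rightarrow> real" where
  "d i = 2 powr (real (i choose 2)) * fact i"

definition xy :: "nat \<Rightarrow> real \<Rightarrow> real \<times> real" where
  "xy t \<rho> = (THE (x, y). (\<Sum>i=1..t. exp (x + real i * y) / d i) = 1 \<and>
                          (\<Sum>i=1..t. real i * exp (x + real i * y) / d i) = \<rho>)"

definition x_t :: "nat \<Rightarrow> real \<Rightarrow> real" where
  "x_t t \<rho> = fst (xy t \<rho>)"

definition y_t :: "nat \<Rightarrow> real \<Rightarrow> real" where
  "y_t t \<rho> = snd (xy t \<rho>)"

definition P_tilde :: "real \<Rightarrow> nat \<Rightarrow> (nat \<Rightarrow> real) set" where
  "P_tilde \<rho> t = {p. (\<forall>i\<in>{1..t}. 0 \<le> p i \<and> p i \<le> 1) \<and> (\<forall>i. i \<notin> {1..t} \<longrightarrow> p i = 0) \<and>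
                     (\<Sum>i=1..t. p i) = 1 \<and> (\<Sum>i=1..t. real i * p i) = \<rho>}"

text \<open>Convention 0 log 0 = 0: Isabelle's ln 0 = 0, so p * ln (p * d) = 0 when p = 0.\<close>
definition L0_tilde :: "real \<Rightarrow> real \<Rightarrow> nat \<Rightarrow> real" where
  "L0_tilde \<rho> k t = (SUP p\<in>P_tilde \<rho> t.
      \<rho> * ln (\<rho> * k) - ln k - \<rho> + 1 - (\<Sum>i=1..t. p i * ln (p i * d i)))"

end

theory Submission
  imports Defs
begin

lemma d_pos: "d i > 0" unfolding d_def by simp

lemma d_ge1: "d i \<ge> 1"
proof -
  have "2 powr (real (i choose 2)) \<ge> (1::real)" by (rule ge_one_powr_ge_zero) auto
  moreover have "fact i \<ge> (1::real)" by simp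
  ultimately show ?thesis unfolding d_def by (metis mult_mono' mult_1 zero_le_one)
qed

lemma d_ne: "d i \<noteq> 0" using d_pos[of i] by simp
lemma d1: "d 1 = 1" unfolding d_def by simp
lemma d1': "d (Suc 0) = 1" using d1 by simp

definition Aa :: "nat \<Rightarrow> real \<Rightarrow> real" where
  "Aa t y = (\<Sum>i=1..t. exp (real i * y) / d i)"
definition Bb :: "nat \<Rightarrow> real \<Rightarrow> real" where
  "Bb t y = (\<Sum>i=1..t. real i * exp (real i * y) / d i)"
definition RR :: "nat \<Rightarrow> real \<Rightarrow> real" where
  "RR t y = Bb t y / Aa t y"

lemma A_pos: "t > 0 \<Longrightarrow> Aa t y > 0"
  unfolding Aa_def by (intro sum_pos) (auto intro: divide_pos_pos d_pos)

lemma sumA: "(\<Sum>i=1..t. exp (x + real i * y) / d i) = exp x * Aa t y"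
  by (simp add: Aa_def sum_distrib_left exp_add)
lemma sumB: "(\<Sum>i=1..t. real i * exp (x + real i * y) / d i) = exp x * Bb t y"
  by (simp add: Bb_def sum_distrib_left exp_add algebra_simps)

lemma R_mono:
  assumes t2: "2 \<le> t" and y: "y1 < y2"
  shows "RR t y1 < RR t y2"
proof -
  define I where "I = {1..t}"
  define a where "a i = exp (real i * y1) / d i" for i
  define b where "b i = exp (real i * y2) / d i" for i
  define T where "T i j = b i * a j - a i * b j" for i j
  have D: "Bb t y2 * Aa t y1 - Bb t y1 * Aa t y2 = (\<Sum>i\<in>I. \<Sum>j\<in>I. real i * T i j)"
  proof -
    have 1: "Bb t y2 * Aa t y1 = (\<Sum>i\<in>I. \<Sum>j\<in>I. (real i * b i) * a j)"
      unfolding sum_product[symmetric] by (simp add: Bb_def Aa_def I_def a_def b_def)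
    have 2: "Bb t y1 * Aa t y2 = (\<Sum>i\<in>I. \<Sum>j\<in>I. (real i * a i) * b j)"
      unfolding sum_product[symmetric] by (simp add: Bb_def Aa_def I_def a_def b_def)
    show ?thesis unfolding 1 2 sum_subtractf[symmetric] T_def
      by (intro sum.cong refl) (simp add: algebra_simps)
  qed
  have sw: "(\<Sum>i\<in>I. \<Sum>j\<in>I. real j * T i j) = - (\<Sum>i\<in>I. \<Sum>j\<in>I. real i * T i j)"
  proof -
    have "(\<Sum>i\<in>I. \<Sum>j\<in>I. real j * T i j) = (\<Sum>j\<in>I. \<Sum>i\<in>I. real j * T i j)"
      by (rule sum.swap)
    also have "\<dots> = (\<Sum>j\<in>I. \<Sum>i\<in>I. - (real j * T j i))"
      by (simp add: T_def algebra_simps)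
    finally show ?thesis by (simp add: sum_negf)
  qed
  have two: "2 * (Bb t y2 * Aa t y1 - Bb t y1 * Aa t y2) = (\<Sum>i\<in>I. \<Sum>j\<in>I. (real i - real j) * T i j)"
    using D sw by (simp add: left_diff_distrib sum_subtractf)
  have nn: "0 \<le> (real i - real j) * T i j" for i j
  proof -
    have T': "T i j = (exp (real i * y2 + real j * y1) - exp (real i * y1 + real j * y2)) / (d i * d j)"
      using d_pos[of i] d_pos[of j] by (simp add: T_def a_def b_def exp_add diff_divide_distrib)
    have "0 \<le> (real i - real j) * (exp (real i * y2 + real j * y1) - exp (real i * y1 + real j * y2))"
    proof (cases "i \<le> j")
      case True
      then have "real i * y2 + real j * y1 \<le> real i * y1 + real j * y2"
        using y by (smt (verit) mult_right_mono of_nat_le_iff left_diff_distrib right_diff_distrib)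
      then show ?thesis using True by (intro mult_nonpos_nonpos) auto
    next
      case False
      then have "real i * y2 + real j * y1 \<ge> real i * y1 + real j * y2"
        using y by (smt (verit) mult_right_mono of_nat_le_iff left_diff_distrib right_diff_distrib)
      then show ?thesis using False by (intro mult_nonneg_nonneg) auto
    qed
    then show ?thesis unfolding T' using d_pos[of i] d_pos[of j] by simp
  qed
  have pos21: "0 < (real 2 - real 1) * T 2 1"
  proof -
    have "exp (real 2 * y2 + real 1 * y1) > exp (real 2 * y1 + real 1 * y2)" using y by simp
    then show ?thesis using d_pos[of 1] d_pos[of 2]
      by (simp add: T_def a_def b_def exp_add field_simps)
  qed
  have "0 < (\<Sum>i\<in>I. \<Sum>j\<in>I. (real i - real j) * T i j)"
  proof (rule sum_pos2[of I 2])
    show "finite I" "2 \<in> I" using t2 by (auto simp: I_def)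
    show "0 < (\<Sum>j\<in>I. (real 2 - real j) * T 2 j)"
      by (rule sum_pos2[of I 1]) (use t2 pos21 nn[of 2] in \<open>auto simp: I_def\<close>)
    show "\<And>i. i \<in> I \<Longrightarrow> 0 \<le> (\<Sum>j\<in>I. (real i - real j) * T i j)"
      by (intro sum_nonneg nn)
  qed
  then have "Bb t y1 * Aa t y2 < Bb t y2 * Aa t y1" using two by (smt (verit))
  moreover have "Aa t y1 > 0" "Aa t y2 > 0" using A_pos t2 by auto
  ultimately show ?thesis unfolding RR_def by (simp add: divide_simps)
qed

lemma F_sum: "Bb t y - \<rho> * Aa t y = (\<Sum>i=1..t. (real i - \<rho>) * exp (real i * y) / d i)"
  by (simp add: Bb_def Aa_def sum_distrib_left sum_subtractf[symmetric] diff_divide_distrib left_diff_distrib)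

lemma F_neg:
  assumes r1: "1 < \<rho>" and rt: "\<rho> < real t"
  shows "\<exists>y. Bb t y - \<rho> * Aa t y < 0"
proof -
  have t1: "t \<ge> 1" using r1 rt by linarith
  define y where "y = ln ((\<rho> - 1) / (2 * real t * real t))"
  have tpos: "real t > 0" using t1 by simp
  have ey: "exp y = (\<rho> - 1) / (2 * real t * real t)" unfolding y_def using r1 tpos by simp
  have "(\<rho> - 1) / (2 * real t * real t) < 1"
  proof -
    have "\<rho> - 1 < real t * real t" using rt t1
      by (smt (verit) mult_le_cancel_left1 of_nat_1 of_nat_mono tpos)
    moreover have "real t * real t > 0" using tpos by simp
    ultimately have "\<rho> - 1 < 2 * real t * real t" by linarith
    then show ?thesis using tpos by (subst divide_less_eq) auto
  qed
  then have yneg: "y \<le> 0" using ey by (smt (verit) exp_ge_add_one_self one_less_exp_iff)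
  have trm: "(real i - \<rho>) * exp (real i * y) / d i \<le> real t * exp (2 * y)" if "i \<in> {2..t}" for i
  proof (cases "real i - \<rho> \<le> 0")
    case True
    then have "(real i - \<rho>) * exp (real i * y) / d i \<le> 0"
      using d_pos[of i] by (simp add: divide_nonpos_pos mult_nonpos_nonneg)
    then show ?thesis by (smt (verit) exp_gt_zero mult_nonneg_nonneg of_nat_0_le_iff)
  next
    case False
    have e1: "exp (real i * y) \<le> exp (2 * y)" using that yneg
      by (simp add: mult_right_mono_neg)
    have e2: "exp (real i * y) / d i \<le> exp (real i * y)" using d_ge1[of i]
      by (simp add: divide_le_eq mult_le_cancel_left1 d_pos)
    have "real i - \<rho> \<le> real t" using that r1 by auto
    then have "(real i - \<rho>) * (exp (real i * y) / d i) \<le> real t * exp (2 * y)"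
    proof (rule mult_mono)
      show "exp (real i * y) / d i \<le> exp (2 * y)" using e1 e2 by linarith
      show "0 \<le> exp (real i * y) / d i" using d_pos[of i] by simp
    qed (use False in auto)
    then show ?thesis by simp
  qed
  have split: "{1..t} = insert 1 {2..t}" using t1 by auto
  have "Bb t y - \<rho> * Aa t y = (1 - \<rho>) * exp y + (\<Sum>i=2..t. (real i - \<rho>) * exp (real i * y) / d i)"
    unfolding F_sum split by (simp add: d1')
  also have "\<dots> \<le> (1 - \<rho>) * exp y + (\<Sum>i=2..t. real t * exp (2 * y))"
    using trm by (intro add_left_mono sum_mono) auto
  also have "\<dots> \<le> (1 - \<rho>) * exp y + real t * real t * exp (2 * y)"
  proof -
    have "real (card {2..t}) \<le> real t" by simp
    then have "real (card {2..t}) * (real t * exp (2 * y)) \<le> real t * (real t * exp (2 * y))"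
      by (intro mult_right_mono) auto
    then show ?thesis by (simp add: mult.assoc)
  qed
  also have "\<dots> = exp y * ((1 - \<rho>) + real t * real t * exp y)"
  proof -
    have "exp (2 * y) = exp y * exp y" by (simp add: exp_add[symmetric])
    then show ?thesis by (simp add: algebra_simps)
  qed
  also have "\<dots> = exp y * ((1 - \<rho>) / 2)" unfolding ey using tpos by (simp add: field_simps)
  also have "\<dots> < 0" using r1 by (simp add: mult_pos_neg)
  finally show ?thesis by blast
qed

lemma F_pos:
  assumes r1: "1 < \<rho>" and rt: "\<rho> < real t"
  shows "\<exists>y. Bb t y - \<rho> * Aa t y > 0"
proof -
  have t1: "t \<ge> 1" using r1 rt by linarith
  have tpos: "real t > 0" using t1 by simp
  define c where "c = 2 * real t * real t * d t / (real t - \<rho>)"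
  define y where "y = ln c"
  have cpos: "c > 0" unfolding c_def using tpos rt d_pos[of t] by simp
  have ey: "exp y = c" unfolding y_def using cpos by simp
  have "real t - \<rho> \<le> 2 * real t * real t * d t"
  proof -
    have "real t \<le> real t * real t" using t1 by (simp add: mult_le_cancel_left1)
    moreover have "real t * real t \<le> real t * real t * d t"
      using d_ge1[of t] by (simp add: mult_le_cancel_left1)
    ultimately show ?thesis using r1 by linarith
  qed
  then have "c \<ge> 1" unfolding c_def using rt by simp
  then have ypos: "y \<ge> 0" unfolding y_def by simp
  define E where "E = exp (real (t - 1) * y)"
  have Epos: "E > 0" unfolding E_def by simp
  have trm: "(real i - \<rho>) * exp (real i * y) / d i \<ge> - (real t * E)" if "i \<in> {1..t-1}" for i
  proof (cases "real i - \<rho> \<ge> 0")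
    case True
    then have "(real i - \<rho>) * exp (real i * y) / d i \<ge> 0"
      using d_pos[of i] by simp
    then show ?thesis using Epos tpos by (smt (verit) mult_pos_pos)
  next
    case False
    have e1: "exp (real i * y) \<le> E" unfolding E_def using that ypos
      by (auto intro: mult_right_mono)
    have e2: "exp (real i * y) / d i \<le> exp (real i * y)" using d_ge1[of i]
      by (simp add: divide_le_eq mult_le_cancel_left1 d_pos)
    have "\<rho> - real i \<le> real t" using that rt by auto
    then have "(\<rho> - real i) * (exp (real i * y) / d i) \<le> real t * E"
    proof (rule mult_mono)
      show "exp (real i * y) / d i \<le> E" using e1 e2 by linarith
      show "0 \<le> exp (real i * y) / d i" using d_pos[of i] by simp
    qed (use False in auto)
    moreover have "(real i - \<rho>) * exp (real i * y) / d i = - ((\<rho> - real i) * (exp (real i * y) / d i))"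
      using d_pos[of i] by (simp add: field_simps)
    ultimately show ?thesis by (simp only: neg_le_iff_le)
  qed
  have split: "{1..t} = insert t {1..t-1}" using t1 by auto
  have main: "(real t - \<rho>) * exp (real t * y) / d t = 2 * real t * real t * E"
  proof -
    have "exp (real t * y) = E * exp y" unfolding E_def using t1
      by (simp add: exp_add[symmetric] of_nat_diff algebra_simps)
    then show ?thesis unfolding ey c_def using rt d_pos[of t] by (simp add: field_simps)
  qed
  have "Bb t y - \<rho> * Aa t y = 2 * real t * real t * E + (\<Sum>i=1..t-1. (real i - \<rho>) * exp (real i * y) / d i)"
    unfolding F_sum split using t1 main by simp
  also have "\<dots> \<ge> 2 * real t * real t * E + (\<Sum>i=1..t-1. - (real t * E))"
    using trm by (intro add_left_mono sum_mono) auto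
  finally have "Bb t y - \<rho> * Aa t y \<ge> 2 * real t * real t * E - real (t - 1) * (real t * E)"
    by simp
  moreover have "real (t - 1) * (real t * E) \<le> real t * (real t * E)"
    using Epos tpos by (intro mult_right_mono) auto
  moreover have "real t * (real t * E) > 0" using Epos tpos by simp
  moreover have "2 * real t * real t * E = 2 * (real t * (real t * E))" by simp
  ultimately have "Bb t y - \<rho> * Aa t y > 0" by linarith
  then show ?thesis by blast
qed

lemma F_cont: "continuous_on S (\<lambda>y. Bb t y - \<rho> * Aa t y)"
  unfolding Aa_def Bb_def by (intro continuous_intros) (auto simp: d_pos less_imp_neq[symmetric])

lemma F_RR: "t > 0 \<Longrightarrow> Bb t y - \<rho> * Aa t y = Aa t y * (RR t y - \<rho>)"
  using A_pos[of t y] unfolding RR_def by (simp add: field_simps)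

lemma RR_le: "2 \<le> t \<Longrightarrow> y1 \<le> y2 \<Longrightarrow> RR t y1 \<le> RR t y2"
  using R_mono[of t y1 y2] by (cases "y1 = y2") auto

lemma RR_inj: "2 \<le> t \<Longrightarrow> RR t y1 = RR t y2 \<Longrightarrow> y1 = y2"
  using R_mono[of t y1 y2] R_mono[of t y2 y1] by (cases y1 y2 rule: linorder_cases) auto

lemma root_exists:
  assumes r1: "1 < \<rho>" and rt: "\<rho> < real t"
  shows "\<exists>y. RR t y = \<rho>"
proof -
  have t2: "t \<ge> 2" using r1 rt by linarith
  obtain ya where ya: "Bb t ya - \<rho> * Aa t ya < 0" using F_neg[OF r1 rt] by blast
  obtain yb where yb: "Bb t yb - \<rho> * Aa t yb > 0" using F_pos[OF r1 rt] by blast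
  have "RR t ya < \<rho>" using ya F_RR[of t ya \<rho>] A_pos[of t ya] t2
    by (simp add: mult_less_0_iff)
  moreover have "RR t yb > \<rho>" using yb F_RR[of t yb \<rho>] A_pos[of t yb] t2
    by (simp add: zero_less_mult_iff)
  ultimately have "ya \<le> yb" using RR_le[OF t2, of yb ya] by force
  then obtain y where "Bb t y - \<rho> * Aa t y = 0"
    using IVT'[of "\<lambda>y. Bb t y - \<rho> * Aa t y" ya 0 yb] ya yb F_cont by force
  then have "RR t y = \<rho>" using F_RR[of t y \<rho>] A_pos[of t y] t2 by simp
  then show ?thesis by blast
qed

definition Pxy :: "nat \<Rightarrow> real \<Rightarrow> real \<Rightarrow> real \<Rightarrow> bool" where
  "Pxy t \<rho> x y \<longleftrightarrow> (\<Sum>i=1..t. exp (x + real i * y) / d i) = 1 \<and>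
                          (\<Sum>i=1..t. real i * exp (x + real i * y) / d i) = \<rho>"

lemma Pxy_iff: "t > 0 \<Longrightarrow> Pxy t \<rho> x y \<longleftrightarrow> exp x * Aa t y = 1 \<and> RR t y = \<rho>"
  unfolding Pxy_def sumA sumB RR_def using A_pos[of t y]
  by (auto simp: field_simps)

lemma xy_props:
  assumes r1: "1 < \<rho>" and rt: "\<rho> < real t"
  shows "exp (x_t t \<rho>) * Aa t (y_t t \<rho>) = 1 \<and> RR t (y_t t \<rho>) = \<rho>"
proof -
  have t2: "t \<ge> 2" using r1 rt by linarith
  obtain y0 where y0: "RR t y0 = \<rho>" using root_exists[OF r1 rt] by blast
  define x0 where "x0 = - ln (Aa t y0)"
  have Ap: "Aa t y0 > 0" using A_pos t2 by simp
  have ex: "exp x0 * Aa t y0 = 1" unfolding x0_def using Ap by (simp add: exp_minus field_simps)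
  have uq: "\<exists>!z. (case z of (x, y) \<Rightarrow> Pxy t \<rho> x y)"
  proof (rule ex1I[of _ "(x0, y0)"])
    show "case (x0, y0) of (x, y) \<Rightarrow> Pxy t \<rho> x y" using Pxy_iff[of t] t2 ex y0 by simp
  next
    fix z assume "case z of (x, y) \<Rightarrow> Pxy t \<rho> x y"
    then obtain x y where z: "z = (x, y)" and P: "Pxy t \<rho> x y" by (cases z) auto
    then have e: "exp x * Aa t y = 1" and r: "RR t y = \<rho>" using Pxy_iff[of t] t2 by auto
    have "y = y0" using RR_inj[OF t2] r y0 by simp
    then have "exp x * Aa t y0 = exp x0 * Aa t y0" using e ex by simp
    then have "exp x = exp x0" using Ap by simp
    then have "x = x0" by simp
    then show "z = (x0, y0)" using z \<open>y = y0\<close> by simp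
  qed
  have "xy t \<rho> = (THE z. case z of (x, y) \<Rightarrow> Pxy t \<rho> x y)"
    unfolding xy_def Pxy_def by simp
  then have "case xy t \<rho> of (x, y) \<Rightarrow> Pxy t \<rho> x y" using theI'[OF uq] by simp
  then have "Pxy t \<rho> (x_t t \<rho>) (y_t t \<rho>)" unfolding x_t_def y_t_def by (cases "xy t \<rho>") auto
  then show ?thesis using Pxy_iff[of t] t2 by auto
qed

lemma gibbs_term:
  fixes p Dd u :: real
  assumes p: "0 \<le> p" and Dd: "Dd > 0"
  shows "p * ln (p * Dd) \<ge> p * u + p - exp u / Dd"
proof (cases "p = 0")
  case True
  have "exp u / Dd > 0" using Dd by (intro divide_pos_pos) auto
  then show ?thesis using True by simp
next
  case False
  then have pp: "p > 0" using p by simp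
  define q where "q = exp u / Dd"
  have qp: "q > 0" unfolding q_def using Dd by simp
  have "ln (q / p) \<le> q / p - 1" using qp pp by (intro ln_le_minus_one) simp
  moreover have "ln (q / p) = u - ln (p * Dd)" unfolding q_def using pp Dd
    by (simp add: ln_div ln_mult)
  ultimately have "u - ln (p * Dd) \<le> q / p - 1" by simp
  then have "p * (u - ln (p * Dd)) \<le> p * (q / p - 1)" using pp by (intro mult_left_mono) auto
  then have "p * u - p * ln (p * Dd) \<le> q - p" using pp by (simp add: algebra_simps)
  then show ?thesis unfolding q_def by simp
qed

lemma gibbs_bound:
  assumes p: "p \<in> P_tilde \<rho> t" and e: "exp x * Aa t y = 1"
  shows "(\<Sum>i=1..t. p i * ln (p i * d i)) \<ge> x + \<rho> * y"
proof -
  have p0: "\<forall>i\<in>{1..t}. 0 \<le> p i" and s1: "(\<Sum>i=1..t. p i) = 1" and s2: "(\<Sum>i=1..t. real i * p i) = \<rho>"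
    using p unfolding P_tilde_def by auto
  have "(\<Sum>i=1..t. p i * ln (p i * d i)) \<ge> (\<Sum>i=1..t. p i * (x + real i * y) + p i - exp (x + real i * y) / d i)"
    using p0 d_pos by (intro sum_mono gibbs_term) auto
  also have "(\<Sum>i=1..t. p i * (x + real i * y) + p i - exp (x + real i * y) / d i)
      = x * (\<Sum>i=1..t. p i) + y * (\<Sum>i=1..t. real i * p i) + (\<Sum>i=1..t. p i) - (\<Sum>i=1..t. exp (x + real i * y) / d i)"
    by (simp add: sum.distrib sum_subtractf sum_distrib_left algebra_simps)
  also have "\<dots> = x + \<rho> * y" unfolding s1 s2 sumA e by simp
  finally show ?thesis .
qed

definition pstar :: "nat \<Rightarrow> real \<Rightarrow> nat \<Rightarrow> real" where
  "pstar t \<rho> i = (if i \<in> {1..t} then exp (x_t t \<rho> + real i * y_t t \<rho>) / d i else 0)"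

lemma pstar_props:
  assumes r1: "1 < \<rho>" and rt: "\<rho> < real t"
  shows "pstar t \<rho> \<in> P_tilde \<rho> t"
    and "(\<Sum>i=1..t. pstar t \<rho> i * ln (pstar t \<rho> i * d i)) = x_t t \<rho> + \<rho> * y_t t \<rho>"
proof -
  define x where "x = x_t t \<rho>"
  define y where "y = y_t t \<rho>"
  have t2: "t \<ge> 2" using r1 rt by linarith
  have P: "Pxy t \<rho> x y" using xy_props[OF r1 rt] Pxy_iff[of t] t2 unfolding x_def y_def by auto
  then have s1: "(\<Sum>i=1..t. exp (x + real i * y) / d i) = 1"
    and s2: "(\<Sum>i=1..t. real i * exp (x + real i * y) / d i) = \<rho>" unfolding Pxy_def by auto
  have ps: "pstar t \<rho> i = exp (x + real i * y) / d i" if "i \<in> {1..t}" for i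
    using that unfolding pstar_def x_def y_def by simp
  have sum1: "(\<Sum>i=1..t. pstar t \<rho> i) = 1" using s1 ps by simp
  have sum2: "(\<Sum>i=1..t. real i * pstar t \<rho> i) = \<rho>" using s2 ps by simp
  have nn: "0 \<le> pstar t \<rho> i" for i unfolding pstar_def using d_pos[of i] by simp
  have le1: "pstar t \<rho> i \<le> 1" if "i \<in> {1..t}" for i
  proof -
    have "pstar t \<rho> i \<le> (\<Sum>i=1..t. pstar t \<rho> i)"
      using that nn by (intro member_le_sum) auto
    then show ?thesis using sum1 by simp
  qed
  show "pstar t \<rho> \<in> P_tilde \<rho> t"
    unfolding P_tilde_def using sum1 sum2 nn le1 by (auto simp: pstar_def d_pos less_imp_le)
  have "(\<Sum>i=1..t. pstar t \<rho> i * ln (pstar t \<rho> i * d i))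
      = (\<Sum>i=1..t. exp (x + real i * y) / d i * (x + real i * y))"
    using d_pos by (intro sum.cong refl) (simp add: ps)
  also have "\<dots> = (\<Sum>i=1..t. x * (exp (x + real i * y) / d i) + y * (real i * exp (x + real i * y) / d i))"
    by (intro sum.cong refl) (simp add: d_ne field_simps)
  also have "\<dots> = x * (\<Sum>i=1..t. exp (x + real i * y) / d i) + y * (\<Sum>i=1..t. real i * exp (x + real i * y) / d i)"
    by (simp only: sum.distrib sum_distrib_left)
  also have "\<dots> = x + \<rho> * y" using s1 s2 by simp
  finally show "(\<Sum>i=1..t. pstar t \<rho> i * ln (pstar t \<rho> i * d i)) = x_t t \<rho> + \<rho> * y_t t \<rho>"
    unfolding x_def y_def .
qed

lemma L0_eq:
  assumes r1: "1 < \<rho>" and rt: "\<rho> < real t"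
  shows "L0_tilde \<rho> k t = \<rho> * ln (\<rho> * k) - ln k - \<rho> + 1 - (x_t t \<rho> + \<rho> * y_t t \<rho>)"
  unfolding L0_tilde_def
proof (rule cSup_eq_maximum)
  show "\<rho> * ln (\<rho> * k) - ln k - \<rho> + 1 - (x_t t \<rho> + \<rho> * y_t t \<rho>)
    \<in> (\<lambda>p. \<rho> * ln (\<rho> * k) - ln k - \<rho> + 1 - (\<Sum>i = 1..t. p i * ln (p i * d i))) ` P_tilde \<rho> t"
    using pstar_props[OF r1 rt] by (intro image_eqI[of _ _ "pstar t \<rho>"]) auto
next
  have t2: "t \<ge> 2" using r1 rt by linarith
  have e: "exp (x_t t \<rho>) * Aa t (y_t t \<rho>) = 1" using xy_props[OF r1 rt] by simp
  show "\<And>z. z \<in> (\<lambda>p. \<rho> * ln (\<rho> * k) - ln k - \<rho> + 1 - (\<Sum>i = 1..t. p i * ln (p i * d i))) ` P_tilde \<rho> t \<Longrightarrow>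
         z \<le> \<rho> * ln (\<rho> * k) - ln k - \<rho> + 1 - (x_t t \<rho> + \<rho> * y_t t \<rho>)"
    using gibbs_bound[OF _ e] by fastforce
qed

lemma g_ineq:
  assumes "1 < \<rho>1" "\<rho>1 < real t" "1 < \<rho>2" "\<rho>2 < real t"
  shows "x_t t \<rho>1 + \<rho>2 * y_t t \<rho>1 \<le> x_t t \<rho>2 + \<rho>2 * y_t t \<rho>2"
  using gibbs_bound[OF pstar_props(1)[OF assms(3,4)], of "x_t t \<rho>1" "y_t t \<rho>1"]
    xy_props[OF assms(1,2)] pstar_props(2)[OF assms(3,4)] by simp

lemma y_cont:
  assumes r1: "1 < \<rho>" and rt: "\<rho> < real t" and e: "\<epsilon> > 0"
  shows "\<exists>\<delta>>0. \<forall>\<rho>'. 1 < \<rho>' \<and> \<rho>' < real t \<and> \<bar>\<rho>' - \<rho>\<bar> < \<delta> \<longrightarrow> \<bar>y_t t \<rho>' - y_t t \<rho>\<bar> < \<epsilon>"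
proof -
  have t2: "t \<ge> 2" using r1 rt by linarith
  define y0 where "y0 = y_t t \<rho>"
  have R0: "RR t y0 = \<rho>" using xy_props[OF r1 rt] unfolding y0_def by simp
  define \<delta> where "\<delta> = min (RR t (y0 + \<epsilon>) - \<rho>) (\<rho> - RR t (y0 - \<epsilon>))"
  have "RR t (y0 + \<epsilon>) > \<rho>" "RR t (y0 - \<epsilon>) < \<rho>" using R_mono[OF t2] e R0 by force+
  then have dpos: "\<delta> > 0" unfolding \<delta>_def by simp
  have "\<bar>y_t t \<rho>' - y0\<bar> < \<epsilon>" if "1 < \<rho>'" "\<rho>' < real t" "\<bar>\<rho>' - \<rho>\<bar> < \<delta>" for \<rho>'
  proof (rule ccontr)
    assume "\<not> ?thesis"
    then consider "y_t t \<rho>' \<ge> y0 + \<epsilon>" | "y_t t \<rho>' \<le> y0 - \<epsilon>" by linarith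
    then show False
    proof cases
      case 1
      then have "RR t (y0 + \<epsilon>) \<le> RR t (y_t t \<rho>')" by (rule RR_le[OF t2])
      then have "RR t (y0 + \<epsilon>) \<le> \<rho>'" using xy_props[OF that(1,2)] by simp
      then show False using that(3) unfolding \<delta>_def by linarith
    next
      case 2
      then have "RR t (y_t t \<rho>') \<le> RR t (y0 - \<epsilon>)" by (rule RR_le[OF t2])
      then have "\<rho>' \<le> RR t (y0 - \<epsilon>)" using xy_props[OF that(1,2)] by simp
      then show False using that(3) unfolding \<delta>_def by linarith
    qed
  qed
  then show ?thesis using dpos unfolding y0_def by blast
qed

lemma g_deriv:
  assumes r1: "1 < \<rho>" and rt: "\<rho> < real t"
  shows "((\<lambda>r. x_t t r + r * y_t t r) has_real_derivative y_t t \<rho>) (at \<rho>)"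
  unfolding has_field_derivative_iff LIM_eq
proof (intro allI impI)
  fix r :: real assume r: "r > 0"
  obtain \<delta> where dp: "\<delta> > 0" and dl: "\<forall>\<rho>'. 1 < \<rho>' \<and> \<rho>' < real t \<and> \<bar>\<rho>' - \<rho>\<bar> < \<delta> \<longrightarrow> \<bar>y_t t \<rho>' - y_t t \<rho>\<bar> < r"
    using y_cont[OF r1 rt r] by blast
  define s where "s = min \<delta> (min (\<rho> - 1) (real t - \<rho>))"
  have sp: "s > 0" unfolding s_def using dp r1 rt by simp
  show "\<exists>s>0. \<forall>x. x \<noteq> \<rho> \<and> norm (x - \<rho>) < s \<longrightarrow>
      norm ((x_t t x + x * y_t t x - (x_t t \<rho> + \<rho> * y_t t \<rho>)) / (x - \<rho>) - y_t t \<rho>) < r"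
  proof (intro exI[of _ s] conjI allI impI sp)
    fix x assume x: "x \<noteq> \<rho> \<and> norm (x - \<rho>) < s"
    have x1: "1 < x" and xt: "x < real t" and xd: "\<bar>x - \<rho>\<bar> < \<delta>" using x unfolding s_def by auto
    define h where "h = x - \<rho>"
    define A where "A = x_t t x + x * y_t t x - (x_t t \<rho> + \<rho> * y_t t \<rho>) - h * y_t t \<rho>"
    define B where "B = y_t t x - y_t t \<rho>"
    have a: "x_t t \<rho> + x * y_t t \<rho> \<le> x_t t x + x * y_t t x" using g_ineq[OF r1 rt x1 xt] .
    have b: "x_t t x + \<rho> * y_t t x \<le> x_t t \<rho> + \<rho> * y_t t \<rho>" using g_ineq[OF x1 xt r1 rt] .
    have A0: "0 \<le> A" using a unfolding A_def h_def by (simp add: algebra_simps)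
    have A1: "A \<le> h * B" using b unfolding A_def h_def B_def by (simp add: algebra_simps)
    have hB: "h * B \<le> \<bar>h\<bar> * \<bar>B\<bar>" by (metis abs_ge_self abs_mult)
    have hnz: "h \<noteq> 0" using x unfolding h_def by simp
    have "\<bar>A / h\<bar> \<le> \<bar>B\<bar>" using A0 A1 hB hnz
      by (simp add: abs_divide divide_le_eq mult.commute)
    moreover have "\<bar>B\<bar> < r" using dl x1 xt xd unfolding B_def by blast
    moreover have "A / h = (x_t t x + x * y_t t x - (x_t t \<rho> + \<rho> * y_t t \<rho>)) / (x - \<rho>) - y_t t \<rho>"
      unfolding A_def h_def using hnz unfolding h_def by (simp add: field_simps)
    ultimately show "norm ((x_t t x + x * y_t t x - (x_t t \<rho> + \<rho> * y_t t \<rho>)) / (x - \<rho>) - y_t t \<rho>) < r"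
      by simp
  qed
qed

theorem lemma34:
  fixes t :: nat and \<rho> k :: real
  assumes "t > 0" and "1 < \<rho>" and "\<rho> < real t" and "k > 0"
  shows "((\<lambda>k'. L0_tilde \<rho> k' t) has_real_derivative ((\<rho> - 1) / k)) (at k)
       \<and> ((\<lambda>\<rho>'. L0_tilde \<rho>' k t) has_real_derivative (ln (\<rho> * k) - y_t t \<rho>)) (at \<rho>)"
proof
  note r1 = assms(2) and rt = assms(3) and kp = assms(4)
  define G where "G = x_t t \<rho> + \<rho> * y_t t \<rho>"
  have eq1: "(\<lambda>k'. L0_tilde \<rho> k' t) = (\<lambda>k'. \<rho> * ln (\<rho> * k') - ln k' - \<rho> + 1 - G)"
    using L0_eq[OF r1 rt] unfolding G_def by auto
  have "((\<lambda>k'. \<rho> * ln (\<rho> * k') - ln k' - \<rho> + 1 - G) has_real_derivative ((\<rho> - 1) / k)) (at k)"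
    using r1 kp by (auto intro!: derivative_eq_intros simp: field_simps)
  then show "((\<lambda>k'. L0_tilde \<rho> k' t) has_real_derivative ((\<rho> - 1) / k)) (at k)"
    unfolding eq1 .
next
  note r1 = assms(2) and rt = assms(3) and kp = assms(4)
  define gg where "gg = (\<lambda>r. x_t t r + r * y_t t r)"
  have gd: "(gg has_real_derivative y_t t \<rho>) (at \<rho>)"
    unfolding gg_def by (rule g_deriv[OF r1 rt])
  have "((\<lambda>r. r * ln (r * k) - ln k - r + 1 - gg r) has_real_derivative
      (ln (\<rho> * k) - y_t t \<rho>)) (at \<rho>)"
    using r1 kp by (auto intro!: derivative_eq_intros gd simp: field_simps)
  then show "((\<lambda>\<rho>'. L0_tilde \<rho>' k t) has_real_derivative (ln (\<rho> * k) - y_t t \<rho>)) (at \<rho>)"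
  proof (rule has_field_derivative_transform_within_open)
    show "open {1<..<real t}" by simp
    show "\<rho> \<in> {1<..<real t}" using r1 rt by simp
    show "\<And>x. x \<in> {1<..<real t} \<Longrightarrow> x * ln (x * k) - ln k - x + 1 - gg x = L0_tilde x k t"
      using L0_eq unfolding gg_def by auto
  qed
qed

end
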